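(* Let $X$ be a real Banach space, $K\subset X$ compact, $\lambda_1,\dots,\lambda_m\in X^*$ with $\|\lambda_j\|_{X^*}=1$, and $w\in\mathbb{R}^m$. Let $\varepsilon>0$ and let $g_\varepsilon\in X$ satisfy $$\|\lambda(g_\varepsilon)-w\|\le\varepsilon\quad\text{and}\quad \operatorname{dist}(g_\varepsilon,K)_X\le\varepsilon .$$ Then $$\|f-g_\varepsilon\|_X\le \varepsilon+2R(K(w,2\varepsilon))_X\qquad\text{for all } f\in K_w .$$ Moreover, if $R(K_w)_X\neq 0$, then for every $C>2$ there is $\varepsilon_0>0$ such that whenever $0<\varepsilon\le\varepsilon_0$ and $g_\varepsilon$ satisfies the two conditions above, $\|f-g_\varepsilon\|_X\le C\,R(K_w)_X$ for all $f\in K_w$.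
   Context: For $g\in X$, $\lambda(g):=(\lambda_1(g),\dots,\lambda_m(g))\in\mathbb{R}^m$; on $\mathbb{R}^m$ use $\|v\|:=\big[\frac1m\sum_{j=1}^m|v_j|^2\big]^{1/2}$. $\operatorname{dist}(g,K)_X:=\inf_{h\in K}\|g-h\|_X$. $K_w:=\{f\in K:\lambda(f)=w\}$ and $K(w,\varepsilon):=\bigcup_{\|w'-w\|\le\varepsilon}K_{w'}$ ($w'\in\mathbb{R}^m$). For $S\subset X$, $R(S)_X:=\inf\{r:\ S\subset B(z,r)_X\text{ for some }z\in X\}$ is the Chebyshev radius, $B(z,r)_X$ the ball of center $z$ and radius $r$. *)

theory Defs
  imports "HOL-Analysis.Analysis"
begin

definition vnorm :: "nat \<Rightarrow> (nat \<Rightarrow> real) \<Rightarrow> real" where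
  "vnorm m v = sqrt ((1 / real m) * (\<Sum>j=1..m. (v j)\<^sup>2))"

definition cheb_radius :: "'a::real_normed_vector set \<Rightarrow> real" where
  "cheb_radius S = Inf {r. 0 \<le> r \<and> (\<exists>z. S \<subseteq> cball z r)}"

definition Kw :: "nat \<Rightarrow> (nat \<Rightarrow> ('a::real_normed_vector \<Rightarrow>\<^sub>L real)) \<Rightarrow> 'a set
    \<Rightarrow> (nat \<Rightarrow> real) \<Rightarrow> 'a set" where
  "Kw m lam K w = {f \<in> K. \<forall>j\<in>{1..m}. blinfun_apply (lam j) f = w j}"

definition Kweps :: "nat \<Rightarrow> (nat \<Rightarrow> ('a::real_normed_vector \<Rightarrow>\<^sub>L real)) \<Rightarrow> 'a set
    \<Rightarrow> (nat \<Rightarrow> real) \<Rightarrow> real \<Rightarrow> 'a set" where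
  "Kweps m lam K w e = \<Union> {Kw m lam K w' | w'. vnorm m (\<lambda>j. w' j - w j) \<le> e}"

end

theory Submission
  imports Defs
begin

lemma vnorm_L2: "vnorm m v = sqrt (1 / real m) * L2_set v {1..m}"
  unfolding vnorm_def L2_set_def by (simp add: real_sqrt_mult[symmetric])

lemma vnorm_nonneg: "0 \<le> vnorm m v"
  unfolding vnorm_def by (simp add: sum_nonneg)

lemma vnorm_triangle: "vnorm m (\<lambda>j. u j + v j) \<le> vnorm m u + vnorm m v"
  unfolding vnorm_L2
  using L2_set_triangle_ineq[of u v "{1..m}"]
  by (metis distrib_left mult_left_mono real_sqrt_ge_zero zero_le_divide_1_iff of_nat_0_le_iff)

lemma vnorm_le:
  assumes "0 < m" "0 \<le> c" "\<forall>j\<in>{1..m}. \<bar>v j\<bar> \<le> c"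
  shows "vnorm m v \<le> c"
proof -
  have "(\<Sum>j=1..m. (v j)\<^sup>2) \<le> (\<Sum>j=1..m. c\<^sup>2)"
    apply (rule sum_mono) using assms by (metis abs_le_square_iff abs_of_nonneg atLeastAtMost_iff)
  also have "\<dots> = real m * c\<^sup>2" by simp
  finally have "(1 / real m) * (\<Sum>j=1..m. (v j)\<^sup>2) \<le> c\<^sup>2"
    using assms(1) by (simp add: field_simps)
  then show ?thesis unfolding vnorm_def
    using assms(2) real_sqrt_le_mono by fastforce
qed

lemma vnorm_zero:
  assumes "0 < m" "vnorm m v = 0" "j \<in> {1..m}"
  shows "v j = 0"
proof -
  have "L2_set v {1..m} = 0" using assms(1,2) unfolding vnorm_L2 by simp
  then show ?thesis using assms(3) L2_set_eq_0_iff[of "{1..m}" v] by simp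
qed

lemma cheb_nonneg:
  assumes "bounded S"
  shows "0 \<le> cheb_radius S"
proof -
  obtain r x0 where "S \<subseteq> cball x0 r" "0 \<le> r" using assms(1) unfolding bounded_subset_cball by blast
  then show ?thesis unfolding cheb_radius_def
    by (intro cInf_greatest) auto
qed

lemma cheb_diam:
  assumes "bounded S" "x \<in> S" "y \<in> S"
  shows "norm (x - y) \<le> 2 * cheb_radius S"
proof -
  obtain r x0 where "S \<subseteq> cball x0 r" "0 \<le> r" using assms(1) unfolding bounded_subset_cball by blast
  have "norm (x - y) / 2 \<le> cheb_radius S" unfolding cheb_radius_def
  proof (rule cInf_greatest)
    show "{r. 0 \<le> r \<and> (\<exists>z. S \<subseteq> cball z r)} \<noteq> {}" using \<open>S \<subseteq> cball x0 r\<close> \<open>0 \<le> r\<close> by auto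
  next
    fix t assume "t \<in> {r. 0 \<le> r \<and> (\<exists>z. S \<subseteq> cball z r)}"
    then obtain z where "S \<subseteq> cball z t" by auto
    then have "dist z x \<le> t" "dist z y \<le> t" using assms by auto
    then have "norm (x - y) \<le> 2 * t"
      by (metis dist_norm dist_triangle2 mult_2 add_mono order_trans dist_commute)
    then show "norm (x - y) / 2 \<le> t" by simp
  qed
  then show ?thesis by simp
qed

lemma lam_diff:
  assumes "0 < m" "\<forall>j\<in>{1..m}. norm (lam j) = 1"
  shows "vnorm m (\<lambda>j. blinfun_apply (lam j) h - w j)
     \<le> norm (h - g) + vnorm m (\<lambda>j. blinfun_apply (lam j) g - w j)"
proof -
  have "vnorm m (\<lambda>j. blinfun_apply (lam j) h - w j)
     = vnorm m (\<lambda>j. (blinfun_apply (lam j) h - blinfun_apply (lam j) g) + (blinfun_apply (lam j) g - w j))"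
    by simp
  also have "\<dots> \<le> vnorm m (\<lambda>j. blinfun_apply (lam j) h - blinfun_apply (lam j) g) + vnorm m (\<lambda>j. blinfun_apply (lam j) g - w j)"
    by (rule vnorm_triangle)
  also have "vnorm m (\<lambda>j. blinfun_apply (lam j) h - blinfun_apply (lam j) g) \<le> norm (h - g)"
  proof (rule vnorm_le[OF assms(1)])
    show "0 \<le> norm (h - g)" by simp
    show "\<forall>j\<in>{1..m}. \<bar>blinfun_apply (lam j) h - blinfun_apply (lam j) g\<bar> \<le> norm (h - g)"
    proof
      fix j assume "j \<in> {1..m}"
      have "\<bar>blinfun_apply (lam j) h - blinfun_apply (lam j) g\<bar> = norm (blinfun_apply (lam j) (h - g))"
        by (simp add: blinfun.diff_right)
      also have "\<dots> \<le> norm (lam j) * norm (h - g)" by (rule norm_blinfun)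
      finally show "\<bar>blinfun_apply (lam j) h - blinfun_apply (lam j) g\<bar> \<le> norm (h - g)"
        using assms(2) \<open>j \<in> {1..m}\<close> by simp
    qed
  qed
  finally show ?thesis by simp
qed

lemma nearest:
  fixes K :: "'a::real_normed_vector set"
  assumes "compact K" "K \<noteq> {}"
  shows "\<exists>h\<in>K. dist g h = infdist g K"
proof -
  obtain h where h: "h \<in> K" "\<forall>y\<in>K. dist g h \<le> dist g y"
  proof -
    have "continuous_on K (dist g)" by (intro continuous_intros)
    then show ?thesis using continuous_attains_inf[OF assms, of "dist g"] that by blast
  qed
  have "dist g h \<le> infdist g K" unfolding infdist_notempty[OF assms(2)]
    by (rule cINF_greatest) (use assms h in auto)
  then have "dist g h = infdist g K" using infdist_le[OF h(1), of g] by linarith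
  then show ?thesis using h(1) by blast
qed

theorem theorem2p3:
  fixes K :: "'a::banach set" and lam :: "nat \<Rightarrow> ('a \<Rightarrow>\<^sub>L real)"
    and w :: "nat \<Rightarrow> real" and m :: nat
  assumes "0 < m"
    and "compact K"
    and "\<forall>j\<in>{1..m}. norm (lam j) = 1"
  shows "(\<forall>e g. 0 < e \<longrightarrow> vnorm m (\<lambda>j. blinfun_apply (lam j) g - w j) \<le> e
            \<longrightarrow> infdist g K \<le> e
            \<longrightarrow> (\<forall>f\<in>Kw m lam K w. norm (f - g) \<le> e + 2 * cheb_radius (Kweps m lam K w (2 * e))))
       \<and> (cheb_radius (Kw m lam K w) \<noteq> 0 \<longrightarrow>
           (\<forall>C>2. \<exists>e0>0. \<forall>e g. 0 < e \<longrightarrow> e \<le> e0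
              \<longrightarrow> vnorm m (\<lambda>j. blinfun_apply (lam j) g - w j) \<le> e
              \<longrightarrow> infdist g K \<le> e
              \<longrightarrow> (\<forall>f\<in>Kw m lam K w. norm (f - g) \<le> C * cheb_radius (Kw m lam K w))))"
proof -
  have bK: "bounded K" using assms(2) compact_imp_bounded by blast
  have KwK: "Kw m lam K w \<subseteq> K" unfolding Kw_def by auto
  have bKw: "bounded (Kw m lam K w)" using bounded_subset[OF bK KwK] .
  have memKweps: "h \<in> Kweps m lam K w e" if "h \<in> K" "vnorm m (\<lambda>j. blinfun_apply (lam j) h - w j) \<le> e" for h e
  proof -
    let ?w' = "\<lambda>j. blinfun_apply (lam j) h"
    have "vnorm m (\<lambda>j. ?w' j - w j) \<le> e \<and> h \<in> Kw m lam K ?w'"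
      using that unfolding Kw_def by simp
    then show ?thesis unfolding Kweps_def by blast
  qed
  have KwepsK: "Kweps m lam K w e \<subseteq> K" for e unfolding Kweps_def Kw_def by blast
  have fw: "blinfun_apply (lam j) f = w j" if "f \<in> Kw m lam K w" "j \<in> {1..m}" for f j
    using that unfolding Kw_def by auto
  have step: "\<exists>h\<in>K. norm (g - h) \<le> e \<and> vnorm m (\<lambda>j. blinfun_apply (lam j) h - w j) \<le> 2 * e"
    if sa: "vnorm m (\<lambda>j. blinfun_apply (lam j) g - w j) \<le> e" "infdist g K \<le> e" "K \<noteq> {}" for g e
  proof -
    obtain h where h: "h \<in> K" "dist g h = infdist g K" using nearest[OF assms(2) sa(3)] by blast
    have "norm (g - h) \<le> e" using h sa(2) by (simp add: dist_norm)
    moreover have "vnorm m (\<lambda>j. blinfun_apply (lam j) h - w j) \<le> 2 * e"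
      using lam_diff[OF assms(1) assms(3), of h w g] sa(1) \<open>norm (g - h) \<le> e\<close>
        norm_minus_commute[of h g] by linarith
    ultimately show ?thesis using h(1) by blast
  qed
  have P1: "norm (f - g) \<le> e + 2 * cheb_radius (Kweps m lam K w (2 * e))"
    if p1: "0 < e" "vnorm m (\<lambda>j. blinfun_apply (lam j) g - w j) \<le> e" "infdist g K \<le> e"
       "f \<in> Kw m lam K w" for e g f
  proof -
    have "K \<noteq> {}" using p1(4) KwK by auto
    then obtain h where h: "h \<in> K" "norm (g - h) \<le> e" "vnorm m (\<lambda>j. blinfun_apply (lam j) h - w j) \<le> 2 * e"
      using step[OF p1(2,3)] by blast
    have "vnorm m (\<lambda>j. blinfun_apply (lam j) f - w j) \<le> 0"
      by (rule vnorm_le[OF assms(1)]) (use fw[OF p1(4)] in auto)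
    then have fK: "f \<in> Kweps m lam K w (2 * e)"
      using memKweps[of f "2*e"] p1(1,4) KwK by auto
    have hK: "h \<in> Kweps m lam K w (2 * e)" using memKweps h by blast
    have "norm (f - h) \<le> 2 * cheb_radius (Kweps m lam K w (2 * e))"
      using cheb_diam[OF bounded_subset[OF bK KwepsK] fK hK] .
    moreover have "norm (f - g) \<le> norm (f - h) + norm (g - h)"
    proof -
      have "f - g = (f - h) - (g - h)" by simp
      then show ?thesis using norm_triangle_ineq4[of "f - h" "g - h"] by simp
    qed
    ultimately show ?thesis using h(2) by linarith
  qed
  have P2: "\<exists>e0>0. \<forall>e g. 0 < e \<longrightarrow> e \<le> e0
              \<longrightarrow> vnorm m (\<lambda>j. blinfun_apply (lam j) g - w j) \<le> e
              \<longrightarrow> infdist g K \<le> e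
              \<longrightarrow> (\<forall>f\<in>Kw m lam K w. norm (f - g) \<le> C * cheb_radius (Kw m lam K w))"
    if R0: "cheb_radius (Kw m lam K w) \<noteq> 0" and C: "C > 2" for C
  proof -
    define R where "R = cheb_radius (Kw m lam K w)"
    have "Kw m lam K w \<noteq> {}"
    proof
      assume "Kw m lam K w = {}"
      then have "cheb_radius (Kw m lam K w) = Inf {r. 0 \<le> r}" unfolding cheb_radius_def by simp
      also have "\<dots> = 0" by (rule cInf_eq_minimum) auto
      finally show False using R0 by simp
    qed
    have Rpos: "R > 0" using cheb_nonneg[OF bKw] R0 unfolding R_def by linarith
    define \<eta> where "\<eta> = (C - 2) * R / 2"
    have eta: "\<eta> > 0" using Rpos C unfolding \<eta>_def by simp
    define \<phi> where "\<phi> = (\<lambda>h. vnorm m (\<lambda>j. blinfun_apply (lam j) h - w j))"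
    define A where "A = K \<inter> {h. \<eta> \<le> infdist h (Kw m lam K w)}"
    have contphi: "continuous_on UNIV \<phi>" unfolding \<phi>_def vnorm_def
      by (intro continuous_intros)
    have "\<exists>\<delta>>0. \<forall>h\<in>A. \<delta> < \<phi> h"
    proof (cases "A = {}")
      case True then show ?thesis by (intro exI[of _ 1]) auto
    next
      case False
      have "closed {h. \<eta> \<le> infdist h (Kw m lam K w)}"
        by (intro closed_Collect_le continuous_intros)
      then have "compact A" unfolding A_def using assms(2) compact_Int_closed by blast
      then obtain x where x: "x \<in> A" "\<forall>y\<in>A. \<phi> x \<le> \<phi> y"
        using continuous_attains_inf[OF _ False, of \<phi>] continuous_on_subset[OF contphi] by blast
      have "\<phi> x \<noteq> 0"
      proof
        assume "\<phi> x = 0"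
        then have "\<forall>j\<in>{1..m}. blinfun_apply (lam j) x - w j = 0"
          using vnorm_zero[OF assms(1)] unfolding \<phi>_def by blast
        then have "x \<in> Kw m lam K w" using x(1) unfolding A_def Kw_def by auto
        then show False using x(1) eta unfolding A_def by auto
      qed
      then have "\<phi> x > 0" using vnorm_nonneg unfolding \<phi>_def by (metis less_eq_real_def)
      then show ?thesis using x by (intro exI[of _ "\<phi> x / 2"]) force
    qed
    then obtain \<delta> where d: "\<delta> > 0" "\<forall>h\<in>A. \<delta> < \<phi> h" by blast
    define e0 where "e0 = min (\<delta> / 2) \<eta>"
    have "e0 > 0" using d eta unfolding e0_def by simp
    moreover have main: "norm (f - g) \<le> C * R"
      if q: "0 < e" "e \<le> e0" "vnorm m (\<lambda>j. blinfun_apply (lam j) g - w j) \<le> e" "infdist g K \<le> e"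
         "f \<in> Kw m lam K w" for e g f
    proof -
      have "K \<noteq> {}" using q(5) KwK by auto
      then obtain h where h: "h \<in> K" "norm (g - h) \<le> e" "\<phi> h \<le> 2 * e"
        using step[OF q(3,4)] unfolding \<phi>_def by blast
      have "h \<notin> A"
      proof
        assume "h \<in> A"
        then have "\<delta> < \<phi> h" using d(2) by blast
        moreover have "e \<le> \<delta> / 2" using q(2) unfolding e0_def by simp
        ultimately show False using h(3) by linarith
      qed
      then have "infdist h (Kw m lam K w) < \<eta>" using h(1) unfolding A_def by auto
      then obtain h' where h': "h' \<in> Kw m lam K w" "dist h h' < \<eta>"
      proof -
        assume r: "\<And>h'. h' \<in> Kw m lam K w \<Longrightarrow> dist h h' < \<eta> \<Longrightarrow> thesis"
        show thesis
        proof (rule ccontr)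
          assume "\<not> thesis"
          then have "\<forall>a\<in>Kw m lam K w. \<eta> \<le> dist h a" using r by force
          then have "\<eta> \<le> infdist h (Kw m lam K w)"
            unfolding infdist_notempty[OF \<open>Kw m lam K w \<noteq> {}\<close>]
            by (intro cINF_greatest \<open>Kw m lam K w \<noteq> {}\<close>) auto
          then show False using \<open>infdist h (Kw m lam K w) < \<eta>\<close> by simp
        qed
      qed
      have "norm (f - h') \<le> 2 * R" using cheb_diam[OF bKw q(5) h'(1)] unfolding R_def .
      have "norm (f - g) \<le> norm (f - h') + norm (h' - h) + norm (h - g)"
      proof -
        have "f - g = ((f - h') + (h' - h)) + (h - g)" by simp
        then have "norm (f - g) \<le> norm ((f - h') + (h' - h)) + norm (h - g)"
          using norm_triangle_ineq[of "(f - h') + (h' - h)" "h - g"] by simp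
        then show ?thesis using norm_triangle_ineq[of "f - h'" "h' - h"] by simp
      qed
      also have "\<dots> \<le> 2 * R + \<eta> + e"
        using \<open>norm (f - h') \<le> 2 * R\<close> h'(2) h(2) by (simp add: dist_norm norm_minus_commute)
      also have "\<dots> \<le> C * R"
      proof -
        have "e \<le> \<eta>" using q(2) unfolding e0_def by simp
        moreover have "2 * \<eta> = C * R - 2 * R" unfolding \<eta>_def by (simp add: field_simps)
        ultimately show ?thesis by linarith
      qed
      finally show ?thesis .
    qed
    ultimately show ?thesis unfolding R_def[symmetric]
      apply (intro exI[of _ e0] conjI allI impI ballI)
       apply assumption
      apply (rule main; assumption)
      done
  qed
  have Q1: "\<forall>e g. 0 < e \<longrightarrow> vnorm m (\<lambda>j. blinfun_apply (lam j) g - w j) \<le> e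
            \<longrightarrow> infdist g K \<le> e
            \<longrightarrow> (\<forall>f\<in>Kw m lam K w. norm (f - g) \<le> e + 2 * cheb_radius (Kweps m lam K w (2 * e)))"
    using P1 by blast
  have Q2: "cheb_radius (Kw m lam K w) \<noteq> 0 \<longrightarrow>
           (\<forall>C>2. \<exists>e0>0. \<forall>e g. 0 < e \<longrightarrow> e \<le> e0
              \<longrightarrow> vnorm m (\<lambda>j. blinfun_apply (lam j) g - w j) \<le> e
              \<longrightarrow> infdist g K \<le> e
              \<longrightarrow> (\<forall>f\<in>Kw m lam K w. norm (f - g) \<le> C * cheb_radius (Kw m lam K w)))"
    using P2 by blast
  show ?thesis using Q1 Q2 by (rule conjI)
qed

end
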